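(* There exist sequences $(\lambda_n)_{n\ge0}$ of positive numbers and $(b_n)_{n\ge0}$ of real numbers such that the classical Jacobi matrix $(Ju)(n)=\lambda_nu(n+1)+b_nu(n)+\lambda_{n-1}u(n-1)$ is not essentially selfadjoint, while the classical Jacobi matrix $(J'u)(n)=\lambda_nu(n+1)+\lambda_{n-1}u(n-1)$ is essentially selfadjoint (both considered in $\ell^2(\mathbb N_0)$ with domain the finitely supported sequences, and with the convention $\lambda_{-1}u(-1)=0$). *)

theory Defs
  imports Complex_Main
begin

text \<open>The Hilbert space l2(N0) is modelled as square-summable functions nat => complex.
  Operators (possibly unbounded, possibly multivalued) are represented by their graphs,
  i.e. sets of pairs (u, Tu).\<close>

definition l2 :: "(nat \<Rightarrow> complex) \<Rightarrow> bool" where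
  "l2 u \<longleftrightarrow> summable (\<lambda>n. (cmod (u n))\<^sup>2)"

definition l2_inner :: "(nat \<Rightarrow> complex) \<Rightarrow> (nat \<Rightarrow> complex) \<Rightarrow> complex" where
  "l2_inner u v = (\<Sum>n. u n * cnj (v n))"

definition l2_dist_sq :: "(nat \<Rightarrow> complex) \<Rightarrow> (nat \<Rightarrow> complex) \<Rightarrow> real" where
  "l2_dist_sq u v = (\<Sum>n. (cmod (u n - v n))\<^sup>2)"

definition adjoint_graph ::
  "((nat \<Rightarrow> complex) \<times> (nat \<Rightarrow> complex)) set \<Rightarrow> ((nat \<Rightarrow> complex) \<times> (nat \<Rightarrow> complex)) set" where
  "adjoint_graph G = {(v, w). l2 v \<and> l2 w \<and> (\<forall>(u, x) \<in> G. l2_inner x v = l2_inner u w)}"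

definition closure_graph ::
  "((nat \<Rightarrow> complex) \<times> (nat \<Rightarrow> complex)) set \<Rightarrow> ((nat \<Rightarrow> complex) \<times> (nat \<Rightarrow> complex)) set" where
  "closure_graph G = {(u, v). l2 u \<and> l2 v \<and>
     (\<exists>f g. (\<forall>k. (f k, g k) \<in> G) \<and>
            (\<lambda>k. l2_dist_sq (f k) u) \<longlonglongrightarrow> 0 \<and> (\<lambda>k. l2_dist_sq (g k) v) \<longlonglongrightarrow> 0)}"

definition self_adjoint_graph ::
  "((nat \<Rightarrow> complex) \<times> (nat \<Rightarrow> complex)) set \<Rightarrow> bool" where
  "self_adjoint_graph G \<longleftrightarrow> adjoint_graph G = G"

definition essentially_self_adjoint ::
  "((nat \<Rightarrow> complex) \<times> (nat \<Rightarrow> complex)) set \<Rightarrow> bool" where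
  "essentially_self_adjoint G \<longleftrightarrow> self_adjoint_graph (closure_graph G)"

definition jacobi_apply ::
  "(nat \<Rightarrow> real) \<Rightarrow> (nat \<Rightarrow> real) \<Rightarrow> (nat \<Rightarrow> complex) \<Rightarrow> nat \<Rightarrow> complex" where
  "jacobi_apply lam b u n =
     of_real (lam n) * u (Suc n) + of_real (b n) * u n
     + (if n = 0 then 0 else of_real (lam (n - 1)) * u (n - 1))"

definition jacobi_graph ::
  "(nat \<Rightarrow> real) \<Rightarrow> (nat \<Rightarrow> real) \<Rightarrow> ((nat \<Rightarrow> complex) \<times> (nat \<Rightarrow> complex)) set" where
  "jacobi_graph lam b = {(u, jacobi_apply lam b u) | u. finite {n. u n \<noteq> 0}}"

end

theory Submission
  imports Defs
begin

abbreviation J where "J \<equiv> jacobi_apply"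

lemma l2_fin: assumes "finite {n. u n \<noteq> 0}" shows "l2 u"
  unfolding l2_def by (rule summable_finite[OF assms]) auto

lemma sq_sum_le: "((a::real) + b)^2 \<le> 2*a^2 + 2*b^2"
proof -
  have "0 \<le> (a-b)^2" by simp
  thus ?thesis by (simp add: power2_eq_square algebra_simps)
qed

lemma l2_diff: assumes "l2 u" "l2 v" shows "l2 (\<lambda>n. u n - v n)"
  unfolding l2_def
proof (rule summable_comparison_test[where g="\<lambda>n. 2*(cmod (u n))^2 + 2*(cmod (v n))^2"])
  show "\<exists>N. \<forall>n\<ge>N. norm ((cmod (u n - v n))\<^sup>2) \<le> 2 * (cmod (u n))\<^sup>2 + 2 * (cmod (v n))\<^sup>2"
  proof (intro exI allI impI)
    fix n
    have "cmod (u n - v n) \<le> cmod (u n) + cmod (v n)" by (rule norm_triangle_ineq4)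
    hence "(cmod (u n - v n))^2 \<le> (cmod (u n) + cmod (v n))^2" by (simp add: power_mono)
    also have "\<dots> \<le> 2 * (cmod (u n))\<^sup>2 + 2 * (cmod (v n))\<^sup>2" by (rule sq_sum_le)
    finally show "norm ((cmod (u n - v n))\<^sup>2) \<le> 2 * (cmod (u n))\<^sup>2 + 2 * (cmod (v n))\<^sup>2" by simp
  qed
  show "summable (\<lambda>n. 2 * (cmod (u n))\<^sup>2 + 2 * (cmod (v n))\<^sup>2)"
    using assms unfolding l2_def by (intro summable_add summable_mult)
qed

lemma l2_cmult: assumes "l2 u" shows "l2 (\<lambda>n. c * u n)"
  using assms unfolding l2_def by (simp add: norm_mult power_mult_distrib summable_mult)

lemma prod_le: "(a::real) * b \<le> (a^2 + b^2)/2"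
proof -
  have "0 \<le> (a-b)^2" by simp
  thus ?thesis by (simp add: power2_eq_square algebra_simps)
qed

lemma l2_prod_norm: assumes "l2 u" "l2 v" shows "summable (\<lambda>n. cmod (u n) * cmod (v n))"
proof (rule summable_comparison_test[where g="\<lambda>n. ((cmod (u n))^2 + (cmod (v n))^2)/2"])
  show "\<exists>N. \<forall>n\<ge>N. norm (cmod (u n) * cmod (v n)) \<le> ((cmod (u n))^2 + (cmod (v n))^2)/2"
    using prod_le by auto
  show "summable (\<lambda>n. ((cmod (u n))^2 + (cmod (v n))^2)/2)"
    using assms unfolding l2_def by (intro summable_add summable_divide)
qed

lemma l2_prod: assumes "l2 u" "l2 v" shows "summable (\<lambda>n. u n * cnj (v n))"
  by (rule summable_norm_cancel) (use l2_prod_norm[OF assms] in \<open>simp add: norm_mult\<close>)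

lemma fin_bound: fixes f :: "nat \<Rightarrow> complex" assumes "finite {n. f n \<noteq> 0}" obtains K where "\<And>n. n \<ge> K \<Longrightarrow> f n = 0"
proof -
  obtain K where K: "\<forall>n\<in>{n. f n \<noteq> 0}. n < K" using assms[unfolded finite_nat_set_iff_bounded] by blast
  show ?thesis by (rule that[of K]) (use K not_less in blast)
qed

lemma green:
  "(\<Sum>n<Suc K. J lam b f n * cnj (v n)) - (\<Sum>n<Suc K. f n * cnj (J lam b v n))
    = of_real (lam K) * (f (Suc K) * cnj (v K) - f K * cnj (v (Suc K)))"
proof (induction K)
  case 0
  show ?case by (simp add: jacobi_apply_def algebra_simps)
next
  case (Suc K)
  have e: "(\<Sum>n<Suc (Suc K). J lam b f n * cnj (v n)) - (\<Sum>n<Suc (Suc K). f n * cnj (J lam b v n))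
     = ((\<Sum>n<Suc K. J lam b f n * cnj (v n)) - (\<Sum>n<Suc K. f n * cnj (J lam b v n)))
       + (J lam b f (Suc K) * cnj (v (Suc K)) - f (Suc K) * cnj (J lam b v (Suc K)))"
    by (simp only: sum.lessThan_Suc) (simp add: algebra_simps)
  show ?case unfolding e Suc.IH by (simp add: jacobi_apply_def algebra_simps)
qed

lemma J_fin: fixes f :: "nat \<Rightarrow> complex" assumes "\<And>n. n \<ge> K \<Longrightarrow> f n = 0"
  shows "\<And>n. n \<ge> Suc K \<Longrightarrow> J lam b f n = 0"
proof -
  fix n assume n: "n \<ge> Suc K"
  have "f n = 0" "f (Suc n) = 0" "f (n - 1) = 0" using n by (auto intro!: assms)
  thus "J lam b f n = 0" by (simp add: jacobi_apply_def)
qed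

lemma J_fin': fixes f :: "nat \<Rightarrow> complex" assumes "finite {n. f n \<noteq> 0}" shows "finite {n. J lam b f n \<noteq> 0}"
proof -
  obtain K where K: "\<And>n. n \<ge> K \<Longrightarrow> f n = 0" using fin_bound[OF assms] by blast
  have "{n. J lam b f n \<noteq> 0} \<subseteq> {..<Suc K}"
  proof
    fix n assume "n \<in> {n. J lam b f n \<noteq> 0}"
    hence "\<not> n \<ge> Suc K" using J_fin[OF K] by auto
    thus "n \<in> {..<Suc K}" by simp
  qed
  thus ?thesis using finite_subset by blast
qed

lemma green_inner: fixes f :: "nat \<Rightarrow> complex" assumes "finite {n. f n \<noteq> 0}"
  shows "l2_inner (J lam b f) v = l2_inner f (J lam b v)"
proof -
  obtain K where K: "\<And>n. n \<ge> K \<Longrightarrow> f n = 0" using fin_bound[OF assms] by blast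
  have K1: "\<And>n. n \<ge> Suc K \<Longrightarrow> J lam b f n = 0" using J_fin[OF K] .
  have "l2_inner (J lam b f) v = (\<Sum>n<Suc K. J lam b f n * cnj (v n))"
    unfolding l2_inner_def by (rule suminf_finite) (auto simp: K1)
  moreover have "l2_inner f (J lam b v) = (\<Sum>n<Suc K. f n * cnj (J lam b v n))"
    unfolding l2_inner_def by (rule suminf_finite) (auto simp: K)
  moreover have "f (Suc K) = 0" "f K = 0" using K by auto
  ultimately show ?thesis using green[of lam b f v K] by simp
qed

lemma amgm_eps: assumes "0 < e" shows "(x::real)*y \<le> x^2/(2*e) + e*y^2/2"
proof -
  have "0 \<le> (x - e*y)^2" by simp
  hence "2*e*(x*y) \<le> x^2 + e^2*y^2" by (simp add: power2_eq_square algebra_simps)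
  hence "x*y \<le> (x^2 + e^2*y^2)/(2*e)" using assms by (simp add: field_simps)
  also have "\<dots> = x^2/(2*e) + e*y^2/2" using assms by (simp add: field_simps power2_eq_square)
  finally show ?thesis .
qed

lemma inner_bound:
  assumes "l2 a" "l2 c" "l2 b" "0 < e"
  shows "cmod (l2_inner b c - l2_inner a c) \<le> l2_dist_sq b a/(2*e) + e*(\<Sum>n. (cmod (c n))^2)/2"
proof -
  have ab: "l2 (\<lambda>n. b n - a n)" using l2_diff assms by blast
  have "l2_inner b c - l2_inner a c = (\<Sum>n. (b n - a n) * cnj (c n))"
    unfolding l2_inner_def using suminf_diff[OF l2_prod[OF assms(3,2)] l2_prod[OF assms(1,2)]]
    by (simp add: algebra_simps)
  also have "cmod \<dots> \<le> (\<Sum>n. cmod ((b n - a n) * cnj (c n)))"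
    by (rule summable_norm) (use l2_prod_norm[OF ab assms(2)] in \<open>simp add: norm_mult\<close>)
  also have "\<dots> \<le> (\<Sum>n. (cmod (b n - a n))^2/(2*e) + e*(cmod (c n))^2/2)"
  proof (rule suminf_le)
    show "\<And>n. cmod ((b n - a n) * cnj (c n)) \<le> (cmod (b n - a n))^2/(2*e) + e*(cmod (c n))^2/2"
      using amgm_eps[OF assms(4)] by (simp add: norm_mult)
    show "summable (\<lambda>n. cmod ((b n - a n) * cnj (c n)))"
      using l2_prod_norm[OF ab assms(2)] by (simp add: norm_mult)
    show "summable (\<lambda>n. (cmod (b n - a n))^2/(2*e) + e*(cmod (c n))^2/2)"
      using ab assms(2) unfolding l2_def by (intro summable_add summable_divide summable_mult)
  qed
  also have "\<dots> = l2_dist_sq b a/(2*e) + e*(\<Sum>n. (cmod (c n))^2)/2"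
  proof -
    have s1: "summable (\<lambda>n. (cmod (b n - a n))^2)" "summable (\<lambda>n. (cmod (c n))^2)"
      using ab assms(2) unfolding l2_def by auto
    show ?thesis unfolding l2_dist_sq_def
      using suminf_add[OF summable_divide[OF s1(1), of "2*e"] summable_mult[OF summable_divide[OF s1(2), of 2], of e]]
        suminf_divide[OF s1(1), of "2*e"] suminf_mult[OF summable_divide[OF s1(2), of 2], of e]
        suminf_divide[OF s1(2), of 2]
      by (simp add: mult.assoc)
  qed
  finally show ?thesis .
qed

lemma inner_cont:
  assumes "l2 a" "l2 c" "\<And>k. l2 (ak k)" "(\<lambda>k. l2_dist_sq (ak k) a) \<longlonglongrightarrow> 0"
  shows "(\<lambda>k. l2_inner (ak k) c) \<longlonglongrightarrow> l2_inner a c"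
proof (rule LIMSEQ_I)
  fix r :: real assume r: "0 < r"
  define C where "C = (\<Sum>n. (cmod (c n))^2)"
  have C0: "0 \<le> C" unfolding C_def using assms(2) unfolding l2_def by (intro suminf_nonneg) auto
  define e where "e = r/(C+1)"
  have e: "0 < e" using r C0 unfolding e_def by auto
  obtain no where no: "\<And>k. k \<ge> no \<Longrightarrow> norm (l2_dist_sq (ak k) a - 0) < r*e"
    using LIMSEQ_D[OF assms(4), of "r*e"] r e by (auto intro: mult_pos_pos)
  have "\<forall>k\<ge>no. norm (l2_inner (ak k) c - l2_inner a c) < r"
  proof (intro allI impI)
    fix k assume k: "k \<ge> no"
    have "norm (l2_inner (ak k) c - l2_inner a c) \<le> l2_dist_sq (ak k) a/(2*e) + e*C/2"
      using inner_bound[OF assms(1,2,3) e] unfolding C_def by simp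
    also have "l2_dist_sq (ak k) a/(2*e) < r/2"
      using no[OF k] e by (simp add: field_simps)
    hence "l2_dist_sq (ak k) a/(2*e) + e*C/2 < r/2 + e*C/2" by simp
    also have "e*C \<le> r" unfolding e_def using r C0 by (simp add: field_simps)
    hence "r/2 + e*C/2 \<le> r" by simp
    finally show "norm (l2_inner (ak k) c - l2_inner a c) < r" by simp
  qed
  thus "\<exists>no. \<forall>k\<ge>no. norm (l2_inner (ak k) c - l2_inner a c) < r" by blast
qed

lemma pt_conv:
  assumes "l2 a" "\<And>k. l2 (ak k)" "(\<lambda>k. l2_dist_sq (ak k) a) \<longlonglongrightarrow> 0"
  shows "(\<lambda>k. ak k n) \<longlonglongrightarrow> a n"
proof -
  have le: "norm (ak k n - a n) \<le> sqrt (l2_dist_sq (ak k) a)" for k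
  proof -
    have s: "summable (\<lambda>m. (cmod (ak k m - a m))^2)" using l2_diff[OF assms(2) assms(1)] unfolding l2_def .
    have "(\<Sum>m\<in>{n}. (cmod (ak k m - a m))^2) \<le> l2_dist_sq (ak k) a"
      unfolding l2_dist_sq_def by (rule sum_le_suminf[OF s]) auto
    thus ?thesis by (simp add: real_le_rsqrt)
  qed
  have h: "(\<lambda>k. sqrt (l2_dist_sq (ak k) a)) \<longlonglongrightarrow> 0"
    using tendsto_real_sqrt[OF assms(3)] by simp
  have "(\<lambda>k. norm (ak k n - a n)) \<longlonglongrightarrow> 0"
    apply (rule real_tendsto_sandwich[where f="\<lambda>_. 0" and h="\<lambda>k. sqrt (l2_dist_sq (ak k) a)"])
    using le h by auto
  thus ?thesis by (simp add: tendsto_norm_zero_iff LIM_zero_iff)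
qed

lemma closure_elim:
  assumes "(u, x) \<in> closure_graph (jacobi_graph lam b)"
  obtains f where "l2 u" "l2 x" "\<And>k. finite {n. f k n \<noteq> 0}"
    "(\<lambda>k. l2_dist_sq (f k) u) \<longlonglongrightarrow> 0" "(\<lambda>k. l2_dist_sq (J lam b (f k)) x) \<longlonglongrightarrow> 0"
proof -
  from assms obtain f g where fg: "\<forall>k. (f k, g k) \<in> jacobi_graph lam b"
    "(\<lambda>k. l2_dist_sq (f k) u) \<longlonglongrightarrow> 0" "(\<lambda>k. l2_dist_sq (g k) x) \<longlonglongrightarrow> 0" and l: "l2 u" "l2 x"
    unfolding closure_graph_def by blast
  have g: "g k = J lam b (f k)" and fin: "finite {n. f k n \<noteq> 0}" for k
    using fg(1) unfolding jacobi_graph_def by auto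
  have "g = (\<lambda>k. J lam b (f k))" using g by auto
  thus ?thesis using that[OF l fin fg(2)] fg(3) by simp
qed

lemma adj_M:
  assumes "l2 v" "l2 (J lam b v)"
  shows "(v, J lam b v) \<in> adjoint_graph (closure_graph (jacobi_graph lam b))"
  unfolding adjoint_graph_def
proof (clarsimp simp: assms)
  fix u x assume ux: "(u, x) \<in> closure_graph (jacobi_graph lam b)"
  then obtain f where l: "l2 u" "l2 x" and fin: "\<And>k. finite {n. f k n \<noteq> 0}"
    and c1: "(\<lambda>k. l2_dist_sq (f k) u) \<longlonglongrightarrow> 0" and c2: "(\<lambda>k. l2_dist_sq (J lam b (f k)) x) \<longlonglongrightarrow> 0"
    using closure_elim[OF ux] by blast
  have A: "(\<lambda>k. l2_inner (J lam b (f k)) v) \<longlonglongrightarrow> l2_inner x v"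
    by (rule inner_cont[OF l(2) assms(1) l2_fin[OF J_fin'[OF fin]] c2])
  have B: "(\<lambda>k. l2_inner (f k) (J lam b v)) \<longlonglongrightarrow> l2_inner u (J lam b v)"
    by (rule inner_cont[OF l(1) assms(2) l2_fin[OF fin] c1])
  have "(\<lambda>k. l2_inner (J lam b (f k)) v) = (\<lambda>k. l2_inner (f k) (J lam b v))"
    using green_inner[OF fin] by auto
  thus "l2_inner x v = l2_inner u (J lam b v)" using A B LIMSEQ_unique by metis
qed

lemma J_tendsto:
  assumes "\<And>n. (\<lambda>k. f k n) \<longlonglongrightarrow> u n"
  shows "(\<lambda>k. J lam b (f k) n) \<longlonglongrightarrow> J lam b u n"
  unfolding jacobi_apply_def
  by (cases "n = 0") (simp_all, (intro tendsto_intros assms)+)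

lemma closure_sub:
  assumes "(u, x) \<in> closure_graph (jacobi_graph lam b)"
  shows "x = J lam b u" "l2 u" "l2 x"
proof -
  obtain f where l: "l2 u" "l2 x" and fin: "\<And>k. finite {n. f k n \<noteq> 0}"
    and c1: "(\<lambda>k. l2_dist_sq (f k) u) \<longlonglongrightarrow> 0" and c2: "(\<lambda>k. l2_dist_sq (J lam b (f k)) x) \<longlonglongrightarrow> 0"
    using closure_elim[OF assms] by blast
  show "l2 u" "l2 x" using l by auto
  show "x = J lam b u"
  proof
    fix n
    have "(\<lambda>k. f k n) \<longlonglongrightarrow> u n" for n by (rule pt_conv[OF l(1) l2_fin[OF fin] c1])
    hence a: "(\<lambda>k. J lam b (f k) n) \<longlonglongrightarrow> J lam b u n" by (rule J_tendsto)
    have b: "(\<lambda>k. J lam b (f k) n) \<longlonglongrightarrow> x n" by (rule pt_conv[OF l(2) l2_fin[OF J_fin'[OF fin]] c2])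
    show "x n = J lam b u n" using LIMSEQ_unique[OF b a] .
  qed
qed

lemma G_sub_closure:
  assumes "finite {n. f n \<noteq> 0}"
  shows "(f, J lam b f) \<in> closure_graph (jacobi_graph lam b)"
  unfolding closure_graph_def
proof (clarsimp, intro conjI exI)
  show "l2 f" "l2 (J lam b f)" using l2_fin assms J_fin' by blast+
  show "\<forall>k. ((\<lambda>k. f) k, (\<lambda>k. J lam b f) k) \<in> jacobi_graph lam b"
    unfolding jacobi_graph_def using assms by auto
  show "(\<lambda>k. l2_dist_sq ((\<lambda>k. f) k) f) \<longlonglongrightarrow> 0" "(\<lambda>k. l2_dist_sq ((\<lambda>k. J lam b f) k) (J lam b f)) \<longlonglongrightarrow> 0"
    by (simp_all add: l2_dist_sq_def)
qed

lemma inner_delta: "l2_inner (\<lambda>m. if m = n then 1 else 0) z = cnj (z n)"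
proof -
  have "l2_inner (\<lambda>m. if m = n then 1 else 0) z = (\<Sum>m\<in>{n}. (if m = n then 1 else 0) * cnj (z m))"
    unfolding l2_inner_def by (rule suminf_finite) auto
  thus ?thesis by simp
qed

lemma adj_sub:
  assumes "(v, w) \<in> adjoint_graph (closure_graph (jacobi_graph lam b))"
  shows "w = J lam b v" "l2 v" "l2 w"
proof -
  show "l2 v" "l2 w" using assms unfolding adjoint_graph_def by auto
  show "w = J lam b v"
  proof
    fix n
    define e where "e = (\<lambda>m::nat. if m = n then (1::complex) else 0)"
    have fin: "finite {m. e m \<noteq> 0}" unfolding e_def by simp
    have "(e, J lam b e) \<in> closure_graph (jacobi_graph lam b)" by (rule G_sub_closure[OF fin])
    hence "l2_inner (J lam b e) v = l2_inner e w" using assms unfolding adjoint_graph_def by auto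
    hence "l2_inner e (J lam b v) = l2_inner e w" using green_inner[OF fin] by simp
    hence "cnj (J lam b v n) = cnj (w n)" unfolding e_def inner_delta .
    thus "w n = J lam b v n" by simp
  qed
qed

lemma non_esa:
  assumes l: "l2 v" and nz: "v n0 \<noteq> 0" and eq: "\<And>n. J lam b v n = \<i> * v n"
  shows "\<not> essentially_self_adjoint (jacobi_graph lam b)"
proof
  assume esa: "essentially_self_adjoint (jacobi_graph lam b)"
  have Jv: "J lam b v = (\<lambda>n. \<i> * v n)" using eq by auto
  have lJ: "l2 (J lam b v)" unfolding Jv by (rule l2_cmult[OF l])
  have adj: "(v, J lam b v) \<in> adjoint_graph (closure_graph (jacobi_graph lam b))" by (rule adj_M[OF l lJ])
  hence cl: "(v, J lam b v) \<in> closure_graph (jacobi_graph lam b)"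
    using esa unfolding essentially_self_adjoint_def self_adjoint_graph_def by simp
  have "l2_inner (J lam b v) v = l2_inner v (J lam b v)"
    using adj cl unfolding adjoint_graph_def by auto
  hence e1: "(\<Sum>n. \<i> * (v n * cnj (v n))) = (\<Sum>n. (-\<i>) * (v n * cnj (v n)))"
    unfolding Jv l2_inner_def by (simp add: mult.assoc mult.left_commute)
  have s: "summable (\<lambda>n. v n * cnj (v n))" by (rule l2_prod[OF l l])
  have "\<i> * (\<Sum>n. v n * cnj (v n)) = (-\<i>) * (\<Sum>n. v n * cnj (v n))"
    using e1 suminf_mult[OF s, of "\<i>"] suminf_mult[OF s, of "-\<i>"] by simp
  hence z: "(\<Sum>n. v n * cnj (v n)) = 0" by (simp add: algebra_simps)
  have sr: "summable (\<lambda>n. (cmod (v n))^2)" using l unfolding l2_def .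
  have fe: "(\<lambda>n. v n * cnj (v n)) = (\<lambda>n. of_real ((cmod (v n))^2))"
    using complex_norm_square by metis
  have "(\<Sum>n. v n * cnj (v n)) = of_real (\<Sum>n. (cmod (v n))^2)"
    unfolding fe by (rule suminf_of_real[OF sr, symmetric])
  hence "(\<Sum>n. (cmod (v n))^2) = 0" using z by simp
  hence "\<forall>n. (cmod (v n))^2 = 0" using suminf_eq_zero_iff[OF sr] by simp
  thus False using nz by simp
qed

lemma even_part:
  fixes p om :: "nat \<Rightarrow> complex" and c :: "nat \<Rightarrow> real"
  assumes rec: "\<And>k. p (Suc k) = of_real (c k) * (om k - p k)"
    and c: "\<And>k. 0 \<le> c k" "\<And>k. c k \<le> 1/2"
    and W: "\<And>K. (\<Sum>k<K. (cmod (om k))^2) \<le> W"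
  shows "(\<lambda>k. (cmod (p k))^2) \<longlonglongrightarrow> 0"
proof -
  have st: "(cmod (p (Suc k)))^2 \<le> ((cmod (om k))^2 + (cmod (p k))^2)/2" for k
  proof -
    have "cmod (p (Suc k)) = c k * cmod (om k - p k)" using rec c by (simp add: norm_mult)
    also have "\<dots> \<le> (1/2) * (cmod (om k) + cmod (p k))"
      using c(1,2)[of k] norm_triangle_ineq4[of "om k" "p k"]
      by (intro mult_mono) auto
    finally have "cmod (p (Suc k)) \<le> (cmod (om k) + cmod (p k))/2" by simp
    hence "(cmod (p (Suc k)))^2 \<le> ((cmod (om k) + cmod (p k))/2)^2" by (simp add: power_mono)
    also have "\<dots> = (cmod (om k) + cmod (p k))^2/4" by (simp add: power_divide)
    also have "\<dots> \<le> (2*(cmod (om k))^2 + 2*(cmod (p k))^2)/4" using sq_sum_le by (intro divide_right_mono) auto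
    finally show ?thesis by simp
  qed
  define P where "P K = (\<Sum>k<K. (cmod (p k))^2)" for K
  have Pmono: "P K \<le> P (Suc K)" for K unfolding P_def by simp
  have bnd: "P K \<le> 2*(cmod (p 0))^2 + W" for K
  proof (cases K)
    case 0
    have "0 \<le> W" using W[of 0] by simp
    thus ?thesis using 0 unfolding P_def by simp
  next
    case (Suc K')
    have "P (Suc K') = (cmod (p 0))^2 + (\<Sum>k<K'. (cmod (p (Suc k)))^2)"
      unfolding P_def by (rule sum.lessThan_Suc_shift)
    also have "(\<Sum>k<K'. (cmod (p (Suc k)))^2) \<le> (\<Sum>k<K'. ((cmod (om k))^2 + (cmod (p k))^2)/2)"
      by (rule sum_mono) (rule st)
    also have "\<dots> = (\<Sum>k<K'. (cmod (om k))^2)/2 + P K'/2"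
      unfolding P_def by (simp add: add_divide_distrib sum.distrib sum_divide_distrib)
    also have "\<dots> \<le> W/2 + P (Suc K')/2" using W[of K'] Pmono[of K'] by simp
    finally have "P (Suc K') \<le> (cmod (p 0))^2 + (W/2 + P (Suc K')/2)" by simp
    thus ?thesis using Suc by simp
  qed
  have "summable (\<lambda>k. (cmod (p k))^2)"
    by (rule summableI_nonneg_bounded[where x="2*(cmod (p 0))^2 + W"]) (use bnd in \<open>auto simp: P_def\<close>)
  thus ?thesis by (rule summable_LIMSEQ_zero)
qed

lemma odd_part:
  fixes q om :: "nat \<Rightarrow> complex" and R :: "nat \<Rightarrow> real"
  assumes rec: "\<And>k. q (Suc k) = om k - of_real (R k) * q k"
    and R: "\<And>k. 4 \<le> R k"
    and Bw: "\<And>k. cmod (om k) \<le> B"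
    and W: "\<And>K. (\<Sum>k<K. (cmod (om k))^2) \<le> W"
    and gr: "\<And>k. cmod (q k) \<le> C * 2^k"
  shows "(\<lambda>k. (cmod (q k))^2) \<longlonglongrightarrow> 0"
proof -
  have qb: "cmod (q k) \<le> B" for k
  proof (rule ccontr)
    assume "\<not> cmod (q k) \<le> B"
    hence big: "cmod (q k) > B" by simp
    have B0: "0 \<le> B" using Bw[of 0] norm_ge_zero order_trans by blast
    have grow: "cmod (q (k + j)) \<ge> 3^j * cmod (q k)" for j
    proof (induction j)
      case 0 show ?case by simp
    next
      case (Suc j)
      have ge: "cmod (q (k+j)) \<ge> cmod (q k)"
        using Suc.IH big B0 by (smt (verit) one_le_power mult_le_cancel_right1 norm_ge_zero)
      have "cmod (q (k + Suc j)) = cmod (om (k+j) - of_real (R (k+j)) * q (k+j))" using rec by simp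
      also have "\<dots> \<ge> cmod (of_real (R (k+j)) * q (k+j)) - cmod (om (k+j))"
        by (metis norm_minus_commute norm_triangle_ineq2)
      also have "cmod (of_real (R (k+j)) * q (k+j)) = R (k+j) * cmod (q (k+j))"
        using R[of "k+j"] by (simp add: norm_mult)
      finally have "cmod (q (k + Suc j)) \<ge> R (k+j) * cmod (q (k+j)) - B" using Bw[of "k+j"] by linarith
      moreover have "R (k+j) * cmod (q (k+j)) \<ge> 4 * cmod (q (k+j))"
        using R[of "k+j"] by (intro mult_right_mono) auto
      ultimately have "cmod (q (k + Suc j)) \<ge> 3 * cmod (q (k+j))" using ge big by linarith
      thus ?case using Suc.IH by simp
    qed
    have qk0: "cmod (q k) > 0" using big B0 by linarith
    obtain j where j: "C * 2^k / cmod (q k) < (3/2::real)^j"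
      using real_arch_pow[of "3/2" "C * 2^k / cmod (q k)"] by auto
    have "3^j * cmod (q k) \<le> C * 2^(k+j)" using grow[of j] gr[of "k+j"] by linarith
    hence "3^j * cmod (q k) \<le> (C * 2^k) * 2^j" by (simp add: power_add mult.assoc)
    hence "(3^j / 2^j) \<le> (C * 2^k) / cmod (q k)" using qk0 by (simp add: field_simps)
    hence "(3/2::real)^j \<le> (C * 2^k) / cmod (q k)" by (simp add: power_divide)
    thus False using j by simp
  qed
  have st: "(cmod (q k))^2 \<le> ((cmod (om k))^2 + (cmod (q (Suc k)))^2)/8" for k
  proof -
    have "of_real (R k) * q k = om k - q (Suc k)" using rec[of k] by simp
    hence "R k * cmod (q k) = cmod (om k - q (Suc k))" using R[of k] by (metis abs_of_nonneg norm_mult norm_of_real order_trans zero_le_numeral)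
    also have "\<dots> \<le> cmod (om k) + cmod (q (Suc k))" by (rule norm_triangle_ineq4)
    finally have "4 * cmod (q k) \<le> cmod (om k) + cmod (q (Suc k))"
      using R[of k] mult_right_mono[of 4 "R k" "cmod (q k)"] by simp
    hence "cmod (q k) \<le> (cmod (om k) + cmod (q (Suc k)))/4" by simp
    hence "(cmod (q k))^2 \<le> ((cmod (om k) + cmod (q (Suc k)))/4)^2" by (simp add: power_mono)
    also have "\<dots> = (cmod (om k) + cmod (q (Suc k)))^2/16" by (simp add: power_divide)
    also have "\<dots> \<le> (2*(cmod (om k))^2 + 2*(cmod (q (Suc k)))^2)/16" using sq_sum_le by (intro divide_right_mono) auto
    finally show ?thesis by simp
  qed
  define Q where "Q K = (\<Sum>k<K. (cmod (q k))^2)" for K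
  have bnd: "Q K \<le> (W + B^2)/7" for K
  proof -
    have "Q K \<le> (\<Sum>k<K. ((cmod (om k))^2 + (cmod (q (Suc k)))^2)/8)"
      unfolding Q_def by (rule sum_mono) (rule st)
    also have "\<dots> = (\<Sum>k<K. (cmod (om k))^2)/8 + (\<Sum>k<K. (cmod (q (Suc k)))^2)/8"
      by (simp add: add_divide_distrib sum.distrib sum_divide_distrib)
    also have "(\<Sum>k<K. (cmod (q (Suc k)))^2) = Q (Suc K) - (cmod (q 0))^2"
      unfolding Q_def by (simp only: sum.lessThan_Suc_shift[where n=K])
    also have "\<dots> \<le> Q K + B^2"
    proof -
      have "Q (Suc K) = Q K + (cmod (q K))^2" unfolding Q_def by simp
      moreover have "(cmod (q K))^2 \<le> B^2" using qb[of K] by (simp add: power_mono)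
      moreover have "0 \<le> (cmod (q 0))^2" by simp
      ultimately show ?thesis by linarith
    qed
    finally have "Q K \<le> W/8 + (Q K + B^2)/8" using W[of K] by simp
    hence "8 * Q K \<le> W + Q K + B^2" by (simp add: field_simps)
    hence "7 * Q K \<le> W + B^2" by simp
    thus ?thesis by simp
  qed
  have "summable (\<lambda>k. (cmod (q k))^2)"
    by (rule summableI_nonneg_bounded[where x="(W + B^2)/7"]) (use bnd in \<open>auto simp: Q_def\<close>)
  thus ?thesis by (rule summable_LIMSEQ_zero)
qed

definition trunc :: "nat \<Rightarrow> (nat \<Rightarrow> complex) \<Rightarrow> nat \<Rightarrow> complex" where
  "trunc N u n = (if n \<le> N then u n else 0)"

lemma trunc_fin: "finite {n. trunc N u n \<noteq> 0}"
proof -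
  have "{n. trunc N u n \<noteq> 0} \<subseteq> {..N}" unfolding trunc_def by auto
  thus ?thesis using finite_subset by blast
qed

lemma tail_summable: fixes f :: "nat \<Rightarrow> real" assumes "summable f" "\<And>n. 0 \<le> f n"
  shows "summable (\<lambda>n. if n \<le> N then 0 else f n)"
  by (rule summable_comparison_test[OF _ assms(1)]) (use assms(2) in auto)

lemma tail_lim: fixes f :: "nat \<Rightarrow> real" assumes "summable f"
  shows "(\<lambda>N. \<Sum>n. if n \<le> N then 0 else f n) \<longlonglongrightarrow> 0"
proof -
  have eq: "(\<Sum>n. if n \<le> N then 0 else f n) = suminf f - (\<Sum>n<Suc N. f n)" for N
  proof -
    have fs: "summable (\<lambda>n. if n \<le> N then f n else 0)"
      by (rule summable_finite[of "{..N}"]) auto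
    have "(\<Sum>n. if n \<le> N then 0 else f n) = (\<Sum>n. f n - (if n \<le> N then f n else 0))"
      by (rule arg_cong[where f=suminf]) auto
    also have "\<dots> = suminf f - (\<Sum>n. if n \<le> N then f n else 0)"
      by (rule suminf_diff[OF assms fs, symmetric])
    also have "(\<Sum>n. if n \<le> N then f n else 0) = (\<Sum>n\<in>{..<Suc N}. if n \<le> N then f n else 0)"
      by (rule suminf_finite) auto
    also have "\<dots> = (\<Sum>n<Suc N. f n)" by (rule sum.cong) auto
    finally show ?thesis .
  qed
  have "(\<lambda>N. \<Sum>n<Suc N. f n) \<longlonglongrightarrow> suminf f"
    using summable_LIMSEQ[OF assms] by (rule LIMSEQ_Suc)
  hence "(\<lambda>N. suminf f - (\<Sum>n<Suc N. f n)) \<longlonglongrightarrow> suminf f - suminf f"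
    by (intro tendsto_intros)
  thus ?thesis unfolding eq by simp
qed

lemma trunc_dist: "l2_dist_sq (trunc N u) u = (\<Sum>n. if n \<le> N then 0 else (cmod (u n))^2)"
  unfolding l2_dist_sq_def trunc_def by (rule arg_cong[where f=suminf]) auto

lemma J_trunc_pt:
  fixes lam b :: "nat \<Rightarrow> real" and u :: "nat \<Rightarrow> complex"
  defines "w \<equiv> J lam b u"
  shows "(cmod (J lam b (trunc N u) n - w n))^2 \<le>
     (if n = N then (cmod (of_real (lam N) * u (Suc N)))^2 else 0)
   + (if n = Suc N then 2*(cmod (of_real (lam N) * u N))^2 else 0)
   + 2*(if n \<le> N then 0 else (cmod (w n))^2)"
proof -
  consider "n < N" | "n = N" | "n = Suc N" | "n > Suc N" by linarith
  thus ?thesis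
  proof cases
    case 1
    hence "J lam b (trunc N u) n = w n"
      unfolding w_def jacobi_apply_def trunc_def by auto
    thus ?thesis using 1 by simp
  next
    case 2
    hence "J lam b (trunc N u) n - w n = - (of_real (lam N) * u (Suc N))"
      unfolding w_def jacobi_apply_def trunc_def by auto
    thus ?thesis using 2 by (simp only: norm_minus_cancel) simp
  next
    case 3
    hence "J lam b (trunc N u) n - w n = of_real (lam N) * u N - w n"
      unfolding w_def jacobi_apply_def trunc_def by auto
    moreover have "(cmod (of_real (lam N) * u N - w n))^2 \<le> 2*(cmod (of_real (lam N) * u N))^2 + 2*(cmod (w n))^2"
      using sq_sum_le norm_triangle_ineq4 power_mono norm_ge_zero order_trans by (smt (verit))
    ultimately show ?thesis using 3 by simp
  next
    case 4
    hence "J lam b (trunc N u) n = 0"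
      unfolding jacobi_apply_def trunc_def by auto
    thus ?thesis using 4 by simp
  qed
qed

lemma J_trunc_dist:
  fixes lam b :: "nat \<Rightarrow> real" and u :: "nat \<Rightarrow> complex"
  assumes w: "l2 (J lam b u)"
  shows "l2_dist_sq (J lam b (trunc N u)) (J lam b u) \<le>
     (cmod (of_real (lam N) * u (Suc N)))^2 + 2*(cmod (of_real (lam N) * u N))^2
   + 2*(\<Sum>n. if n \<le> N then 0 else (cmod (J lam b u n))^2)"
proof -
  let ?w = "J lam b u"
  define a where "a = (cmod (of_real (lam N) * u (Suc N)))^2"
  define c where "c = 2*(cmod (of_real (lam N) * u N))^2"
  define T where "T = (\<lambda>n. if n \<le> N then 0 else (cmod (?w n))^2)"
  have sw: "summable (\<lambda>n. (cmod (?w n))^2)" using w unfolding l2_def .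
  have sT: "summable T" unfolding T_def by (rule tail_summable[OF sw]) auto
  have s1: "(\<lambda>n. if n = N then a else 0) sums a" using sums_single[of N "\<lambda>_. a"] by simp
  have s2: "(\<lambda>n. if n = Suc N then c else 0) sums c" using sums_single[of "Suc N" "\<lambda>_. c"] by simp
  have s3: "(\<lambda>n. 2 * T n) sums (2 * suminf T)" using sums_mult[OF summable_sums[OF sT], of 2] by simp
  have hs: "(\<lambda>n. (if n = N then a else 0) + (if n = Suc N then c else 0) + 2 * T n) sums (a + c + 2 * suminf T)"
    by (intro sums_add s1 s2 s3)
  have ds: "summable (\<lambda>n. (cmod (J lam b (trunc N u) n - ?w n))^2)"
    using l2_diff[OF l2_fin[OF J_fin'[OF trunc_fin]] w] unfolding l2_def .
  have pt: "\<And>n. (cmod (J lam b (trunc N u) n - ?w n))^2 \<le> (if n = N then a else 0) + (if n = Suc N then c else 0) + 2 * T n"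
    unfolding a_def c_def T_def by (rule J_trunc_pt)
  have "l2_dist_sq (J lam b (trunc N u)) ?w \<le> a + c + 2 * suminf T"
    unfolding l2_dist_sq_def
    by (rule sums_le[OF pt summable_sums[OF ds] hs])
  thus ?thesis unfolding a_def c_def T_def .
qed

lemma sub_sum: fixes f :: "nat \<Rightarrow> real" and g :: "nat \<Rightarrow> nat" and K :: nat assumes "summable f" "\<And>n. 0 \<le> f n" "inj g"
  shows "(\<Sum>k<K. f (g k)) \<le> suminf f"
proof -
  have fin: "finite (g ` {..<K})" by simp
  have e: "(\<Sum>k<K. f (g k)) = sum f (g ` {..<K})"
    using sum.reindex[of g "{..<K}" f] assms(3) by (simp add: inj_on_def)
  have "sum f (g ` {..<K}) \<le> suminf f" using assms(1) fin assms(2) by (rule sum_le_suminf)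
  thus ?thesis using e by simp
qed

lemma l2_pt_bound: assumes "l2 u" shows "cmod (u n) \<le> sqrt (\<Sum>n. (cmod (u n))^2)"
proof -
  have "(\<Sum>m\<in>{n}. (cmod (u m))^2) \<le> (\<Sum>n. (cmod (u n))^2)"
    by (rule sum_le_suminf) (use assms in \<open>auto simp: l2_def\<close>)
  thus ?thesis by (simp add: real_le_rsqrt)
qed

lemma trunc_closure:
  fixes lam :: "nat \<Rightarrow> real" and A :: real
  assumes pos: "\<And>n. lam n > 0"
    and H1: "\<And>k. lam (Suc (Suc (2*k))) \<le> lam (Suc (2*k)) / 2"
    and H2: "\<And>k. 4 * lam (2*k) \<le> lam (Suc (2*k))"
    and H3: "\<And>k. lam (2*k) \<le> A * 2^k"
    and u: "l2 u" and w: "l2 (J lam (\<lambda>_. 0) u)"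
  shows "(u, J lam (\<lambda>_. 0) u) \<in> closure_graph (jacobi_graph lam (\<lambda>_. 0))"
proof -
  define b :: "nat \<Rightarrow> real" where "b = (\<lambda>_. 0)"
  define wf where "wf = J lam b u"
  have wl: "l2 wf" using w unfolding wf_def b_def .
  have sw: "summable (\<lambda>n. (cmod (wf n))^2)" using wl unfolding l2_def .
  define W where "W = (\<Sum>n. (cmod (wf n))^2)"
  define p where "p k = of_real (lam (2*k)) * u (2*k)" for k
  define q where "q k = of_real (lam (2*k)) * u (Suc (2*k))" for k
  have wodd: "wf (Suc (2*k)) = of_real (lam (Suc (2*k))) * u (Suc (Suc (2*k))) + p k" for k
    unfolding wf_def p_def b_def jacobi_apply_def by simp
  have weven: "wf (Suc (Suc (2*k))) = q (Suc k) + of_real (lam (Suc (2*k))) * u (Suc (2*k))" for k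
    unfolding wf_def q_def b_def jacobi_apply_def by simp
  have pl: "(\<lambda>k. (cmod (p k))^2) \<longlonglongrightarrow> 0"
  proof (rule even_part[where om="\<lambda>k. wf (Suc (2*k))" and c="\<lambda>k. lam (Suc (Suc (2*k))) / lam (Suc (2*k))" and W=W])
    fix k
    have l1: "lam (Suc (2*k)) > 0" using pos by blast
    have "u (Suc (Suc (2*k))) = (wf (Suc (2*k)) - p k) / of_real (lam (Suc (2*k)))"
      using wodd[of k] l1 by (simp add: field_simps)
    thus "p (Suc k) = of_real (lam (Suc (Suc (2*k))) / lam (Suc (2*k))) * (wf (Suc (2*k)) - p k)"
      unfolding p_def by simp
    show "0 \<le> lam (Suc (Suc (2*k))) / lam (Suc (2*k))" using pos[of "Suc (Suc (2*k))"] pos[of "Suc (2*k)"] by simp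
    show "lam (Suc (Suc (2*k))) / lam (Suc (2*k)) \<le> 1/2" using H1[of k] l1 by (simp add: field_simps)
  next
    fix K
    show "(\<Sum>k<K. (cmod (wf (Suc (2*k))))^2) \<le> W"
      unfolding W_def by (rule sub_sum[OF sw, of "\<lambda>k. Suc (2*k)"]) (auto simp: inj_def)
  qed
  define Bu where "Bu = sqrt (\<Sum>n. (cmod (u n))^2)"
  have Bu0: "0 \<le> Bu" unfolding Bu_def using u unfolding l2_def by (simp add: suminf_nonneg)
  have ql: "(\<lambda>k. (cmod (q k))^2) \<longlonglongrightarrow> 0"
  proof (rule odd_part[where om="\<lambda>k. wf (Suc (Suc (2*k)))" and R="\<lambda>k. lam (Suc (2*k)) / lam (2*k)"
        and W=W and B="sqrt W" and C="A * Bu"])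
    fix k
    have l0: "lam (2*k) > 0" using pos by blast
    show "q (Suc k) = wf (Suc (Suc (2*k))) - of_real (lam (Suc (2*k)) / lam (2*k)) * q k"
      using weven[of k] l0 unfolding q_def by (simp add: field_simps)
    show "4 \<le> lam (Suc (2*k)) / lam (2*k)" using H2[of k] l0 by (simp add: field_simps)
    show "cmod (wf (Suc (Suc (2*k)))) \<le> sqrt W" unfolding W_def by (rule l2_pt_bound[OF wl])
    have "cmod (q k) = lam (2*k) * cmod (u (Suc (2*k)))" unfolding q_def using l0 by (simp add: norm_mult)
    also have "\<dots> \<le> (A * 2^k) * Bu"
      by (rule mult_mono[OF H3]) (use l2_pt_bound[OF u] l0 H3[of k] in \<open>auto simp: Bu_def\<close>)
    finally show "cmod (q k) \<le> A * Bu * 2^k" by (simp add: algebra_simps)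
  next
    fix K
    show "(\<Sum>k<K. (cmod (wf (Suc (Suc (2*k)))))^2) \<le> W"
      unfolding W_def by (rule sub_sum[OF sw, of "\<lambda>k. Suc (Suc (2*k))"]) (auto simp: inj_def)
  qed
  define f where "f k = trunc (2*k) u" for k
  have sm: "strict_mono (\<lambda>k::nat. 2*k)" by (rule strict_monoI) simp
  have c1: "(\<lambda>k. l2_dist_sq (f k) u) \<longlonglongrightarrow> 0"
  proof -
    have "(\<lambda>N. l2_dist_sq (trunc N u) u) \<longlonglongrightarrow> 0"
      unfolding trunc_dist by (rule tail_lim) (use u in \<open>simp add: l2_def\<close>)
    from LIMSEQ_subseq_LIMSEQ[OF this sm] show ?thesis unfolding f_def o_def .
  qed
  have tl: "(\<lambda>k. \<Sum>n. if n \<le> 2*k then 0 else (cmod (wf n))^2) \<longlonglongrightarrow> 0"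
    using LIMSEQ_subseq_LIMSEQ[OF tail_lim[OF sw] sm] unfolding o_def .
  have c2: "(\<lambda>k. l2_dist_sq (J lam b (f k)) wf) \<longlonglongrightarrow> 0"
  proof (rule real_tendsto_sandwich[where f="\<lambda>_. 0" and
        h="\<lambda>k. (cmod (q k))^2 + 2*(cmod (p k))^2 + 2*(\<Sum>n. if n \<le> 2*k then 0 else (cmod (wf n))^2)"])
    show "\<forall>\<^sub>F k in sequentially. 0 \<le> l2_dist_sq (J lam b (f k)) wf"
    proof (rule always_eventually, rule allI)
      fix k
      have "summable (\<lambda>n. (cmod (J lam b (f k) n - wf n))^2)"
        using l2_diff[OF l2_fin[OF J_fin'[OF trunc_fin]] wl] unfolding f_def l2_def .
      thus "0 \<le> l2_dist_sq (J lam b (f k)) wf" unfolding l2_dist_sq_def by (rule suminf_nonneg) simp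
    qed
    show "\<forall>\<^sub>F k in sequentially. l2_dist_sq (J lam b (f k)) wf \<le>
       (cmod (q k))^2 + 2*(cmod (p k))^2 + 2*(\<Sum>n. if n \<le> 2*k then 0 else (cmod (wf n))^2)"
    proof (rule always_eventually, rule allI)
      fix k
      show "l2_dist_sq (J lam b (f k)) wf \<le>
       (cmod (q k))^2 + 2*(cmod (p k))^2 + 2*(\<Sum>n. if n \<le> 2*k then 0 else (cmod (wf n))^2)"
        using J_trunc_dist[OF wl[unfolded wf_def], of "2*k"] unfolding f_def q_def p_def wf_def .
    qed
    show "(\<lambda>_. 0) \<longlonglongrightarrow> (0::real)" by simp
    show "(\<lambda>k. (cmod (q k))^2 + 2*(cmod (p k))^2 + 2*(\<Sum>n. if n \<le> 2*k then 0 else (cmod (wf n))^2)) \<longlonglongrightarrow> 0"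
      using tendsto_add[OF tendsto_add[OF ql tendsto_mult[OF tendsto_const pl]] tendsto_mult[OF tendsto_const tl], of 2 2]
      by simp
  qed
  have "(u, wf) \<in> closure_graph (jacobi_graph lam b)"
    unfolding closure_graph_def
  proof (clarsimp, intro conjI exI)
    show "l2 u" "l2 wf" using u wl by auto
    show "\<forall>k. (f k, J lam b (f k)) \<in> jacobi_graph lam b"
      unfolding jacobi_graph_def f_def using trunc_fin by blast
    show "(\<lambda>k. l2_dist_sq (f k) u) \<longlonglongrightarrow> 0" by (rule c1)
    show "(\<lambda>k. l2_dist_sq (J lam b (f k)) wf) \<longlonglongrightarrow> 0" by (rule c2)
  qed
  thus ?thesis unfolding wf_def b_def .
qed

definition bcoef :: "(nat \<Rightarrow> real) \<Rightarrow> (nat \<Rightarrow> complex) \<Rightarrow> nat \<Rightarrow> real" where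
  "bcoef lam v n = Re ((\<i> * v n - of_real (lam n) * v (Suc n)
       - (if n = 0 then 0 else of_real (lam (n - 1)) * v (n - 1))) * cnj (v n) / of_real ((cmod (v n))^2))"

lemma Im_cnj_swap: "Im (a * cnj b) = - Im (b * cnj a)"
  by (simp add: algebra_simps)

lemma eigen:
  fixes v :: "nat \<Rightarrow> complex" and lam :: "nat \<Rightarrow> real"
  assumes nz: "\<And>n. v n \<noteq> 0"
    and lam: "\<And>n. lam n * Im (v (Suc n) * cnj (v n)) = (\<Sum>j\<le>n. (cmod (v j))^2)"
  shows "J lam (bcoef lam v) v n = \<i> * v n"
proof -
  define Y where "Y = \<i> * v n - of_real (lam n) * v (Suc n)
       - (if n = 0 then 0 else of_real (lam (n - 1)) * v (n - 1))"
  define N where "N = (cmod (v n))^2"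
  have N0: "N > 0" unfolding N_def using nz[of n] by simp
  have vv: "v n * cnj (v n) = of_real N" unfolding N_def using complex_norm_square by metis
  define X where "X = Y * cnj (v n) / of_real N"
  have XY: "X * v n = Y" unfolding X_def using vv N0
    by (simp add: field_simps)
  have ImY: "Im (Y * cnj (v n)) = 0"
  proof (cases n)
    case 0
    have "Im (Y * cnj (v n)) = N - lam 0 * Im (v (Suc 0) * cnj (v 0))"
      unfolding Y_def N_def using 0 by (simp add: algebra_simps complex_norm_square[symmetric] power2_eq_square)
    also have "lam 0 * Im (v (Suc 0) * cnj (v 0)) = N" using lam[of 0] 0 unfolding N_def by simp
    finally show ?thesis by simp
  next
    case (Suc m)
    have "Im (Y * cnj (v n)) = N - lam n * Im (v (Suc n) * cnj (v n)) - lam m * Im (v m * cnj (v n))"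
      unfolding Y_def N_def using Suc by (simp add: algebra_simps complex_norm_square[symmetric] power2_eq_square)
    also have "Im (v m * cnj (v n)) = - Im (v (Suc m) * cnj (v m))" using Suc Im_cnj_swap by simp
    also have "lam n * Im (v (Suc n) * cnj (v n)) = (\<Sum>j\<le>n. (cmod (v j))^2)" by (rule lam)
    finally have "Im (Y * cnj (v n)) = N - (\<Sum>j\<le>n. (cmod (v j))^2) + lam m * Im (v (Suc m) * cnj (v m))" by (simp add: algebra_simps)
    also have "lam m * Im (v (Suc m) * cnj (v m)) = (\<Sum>j\<le>m. (cmod (v j))^2)" by (rule lam)
    finally show ?thesis using Suc unfolding N_def by simp
  qed
  have ImX: "Im X = 0" unfolding X_def using ImY by (simp add: Im_divide_of_real)
  have Xr: "of_real (bcoef lam v n) = X"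
    unfolding bcoef_def using ImX unfolding X_def Y_def N_def by (simp add: complex_eq_iff)
  have "J lam (bcoef lam v) v n = of_real (lam n) * v (Suc n) + X * v n
      + (if n = 0 then 0 else of_real (lam (n - 1)) * v (n - 1))"
    unfolding jacobi_apply_def Xr ..
  also have "\<dots> = \<i> * v n" unfolding XY Y_def by simp
  finally show ?thesis .
qed

definition al :: complex where "al = Complex (-1/10) (7/10)"

definition be :: complex where "be = Complex 0 (1/4)"

definition vv :: "nat \<Rightarrow> complex" where
  "vv n = (if even n then al ^ (n div 2) else be * al ^ (n div 2))"

definition SS :: "nat \<Rightarrow> real" where "SS n = (\<Sum>j\<le>n. (cmod (vv j))^2)"

definition II :: "nat \<Rightarrow> real" where "II n = Im (vv (Suc n) * cnj (vv n))"

definition lamc :: "nat \<Rightarrow> real" where "lamc n = SS n / II n"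

lemma al_cnj: "al * cnj al = 1/2" by (simp add: al_def complex_eq_iff)

lemma al_cnj_pow: "al^k * cnj al^k = of_real ((1/2)^k)"
  by (simp add: power_mult_distrib[symmetric] al_cnj)

lemma al_be: "al * cnj be = Complex (7/40) (1/40)" by (simp add: al_def be_def complex_eq_iff)

lemma vv_even: "vv (2*k) = al^k" unfolding vv_def by simp

lemma vv_odd: "vv (Suc (2*k)) = be * al^k" unfolding vv_def by simp

lemma nv_even: "(cmod (vv (2*k)))^2 = (1/2)^k"
proof -
  have "of_real ((cmod (vv (2*k)))^2) = vv (2*k) * cnj (vv (2*k))" by (rule complex_norm_square)
  also have "\<dots> = of_real ((1/2)^k)" unfolding vv_even by (simp add: al_cnj_pow)
  finally show ?thesis by (simp only: of_real_eq_iff)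
qed

lemma nv_odd: "(cmod (vv (Suc (2*k))))^2 = (1/16)*(1/2)^k"
proof -
  have "of_real ((cmod (vv (Suc (2*k))))^2) = vv (Suc (2*k)) * cnj (vv (Suc (2*k)))" by (rule complex_norm_square)
  also have "\<dots> = (be * cnj be) * (al^k * cnj al^k)" unfolding vv_odd by (simp add: algebra_simps)
  also have "\<dots> = of_real ((1/16)*(1/2)^k)" unfolding al_cnj_pow by (simp add: be_def complex_eq_iff)
  finally show ?thesis by (simp only: of_real_eq_iff)
qed

lemma II_even: "II (2*k) = (1/4)*(1/2)^k"
proof -
  have "vv (Suc (2*k)) * cnj (vv (2*k)) = be * (al^k * cnj al^k)" unfolding vv_odd vv_even by (simp add: algebra_simps)
  also have "\<dots> = be * of_real ((1/2)^k)" by (simp add: al_cnj_pow)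
  finally show ?thesis unfolding II_def by (simp add: be_def)
qed

lemma II_odd: "II (Suc (2*k)) = (1/40)*(1/2)^k"
proof -
  have e: "Suc (Suc (2*k)) = 2 * Suc k" by simp
  have "vv (Suc (Suc (2*k))) * cnj (vv (Suc (2*k))) = (al * cnj be) * (al^k * cnj al^k)"
    unfolding e vv_odd vv_even by (simp add: algebra_simps)
  also have "\<dots> = Complex (7/40) (1/40) * of_real ((1/2)^k)" by (simp add: al_cnj_pow al_be)
  finally show ?thesis unfolding II_def by simp
qed

lemma parity_cases: obtains k where "n = 2*k" | k where "n = Suc (2*k)"
  by (metis oddE evenE Suc_eq_plus1)

lemma II_pos: "II n > 0"
  by (cases n rule: parity_cases) (simp_all add: II_even II_odd)

lemma vv_nz: "vv n \<noteq> 0"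
proof -
  have "al \<noteq> 0" "be \<noteq> 0" by (simp_all add: al_def be_def complex_eq_iff)
  thus ?thesis unfolding vv_def by simp
qed

lemma nv_bound: "(cmod (vv n))^2 \<le> (3/4)^n"
proof (cases n rule: parity_cases)
  case (1 k)
  have "(1/2::real)^k \<le> (9/16)^k" by (rule power_mono) auto
  also have "(9/16::real)^k = (3/4)^(2*k)" by (simp add: power_mult power2_eq_square)
  finally show ?thesis using 1 nv_even[of k] by simp
next
  case (2 k)
  have "(1/2::real)^k \<le> (9/16)^k" by (rule power_mono) auto
  moreover have "(0::real) \<le> (9/16)^k" by simp
  ultimately have "(1/16)*(1/2::real)^k \<le> (3/4)*(9/16)^k" by linarith
  also have "(3/4)*(9/16::real)^k = (3/4)^(Suc (2*k))" by (simp add: power_mult power2_eq_square)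
  finally show ?thesis using 2 nv_odd[of k] by simp
qed

lemma l2_vv: "l2 vv"
  unfolding l2_def
  by (rule summable_comparison_test[where g="\<lambda>n. (3/4::real)^n"])
     (use nv_bound in \<open>auto intro: summable_geometric\<close>)

lemma SS_mono: "m \<le> n \<Longrightarrow> SS m \<le> SS n"
  unfolding SS_def by (rule sum_mono2) auto

lemma SS_ge1: "1 \<le> SS n"
proof -
  have "SS 0 = 1" unfolding SS_def by (simp add: vv_def)
  thus ?thesis using SS_mono[of 0 n] by simp
qed

lemma SS_le: "SS n \<le> (\<Sum>j. (cmod (vv j))^2)"
  unfolding SS_def by (rule sum_le_suminf) (use l2_vv in \<open>auto simp: l2_def\<close>)

lemma lamc_pos: "lamc n > 0"
  unfolding lamc_def using SS_ge1[of n] II_pos[of n] by simp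

lemma lamc_eq: "lamc n * II n = SS n"
  unfolding lamc_def using II_pos[of n] by simp

lemma H1: "lamc (Suc (Suc (2*k))) \<le> lamc (Suc (2*k)) / 2"
proof -
  have e: "Suc (Suc (2*k)) = 2 * Suc k" by simp
  have S: "SS (Suc (Suc (2*k))) \<le> 2 * SS (Suc (2*k))"
  proof -
    have "SS (Suc (Suc (2*k))) = SS (Suc (2*k)) + (cmod (vv (2 * Suc k)))^2"
      unfolding SS_def e[symmetric] by simp
    also have "(cmod (vv (2 * Suc k)))^2 = (1/2)^Suc k" by (rule nv_even)
    also have "\<dots> \<le> (cmod (vv (2*k)))^2" unfolding nv_even by simp
    also have "\<dots> \<le> SS (Suc (2*k))" unfolding SS_def by (rule member_le_sum) auto
    finally show ?thesis by simp
  qed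
  have x: "(0::real) < (1/2)^k" by simp
  show ?thesis unfolding lamc_def e II_even II_odd unfolding e[symmetric]
    using S x SS_ge1[of "Suc (2*k)"] by (simp add: field_simps)
qed

lemma H2: "4 * lamc (2*k) \<le> lamc (Suc (2*k))"
proof -
  have x: "(0::real) < (1/2)^k" by simp
  have S: "SS (2*k) \<le> SS (Suc (2*k))" by (rule SS_mono) simp
  show ?thesis unfolding lamc_def II_even II_odd
    using S x SS_ge1[of "2*k"] by (simp add: field_simps)
qed

lemma H3: "lamc (2*k) \<le> (4 * (\<Sum>j. (cmod (vv j))^2)) * 2^k"
proof -
  have x: "(0::real) < (1/2)^k" by simp
  have "lamc (2*k) = 4 * 2^k * SS (2*k)" unfolding lamc_def II_even by (simp add: field_simps power_divide)
  also have "\<dots> \<le> 4 * 2^k * (\<Sum>j. (cmod (vv j))^2)" using SS_le by (intro mult_left_mono) auto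
  finally show ?thesis by (simp add: algebra_simps)
qed

lemma esa_crit:
  fixes lam :: "nat \<Rightarrow> real" and A :: real
  assumes pos: "\<And>n. lam n > 0"
    and H1: "\<And>k. lam (Suc (Suc (2*k))) \<le> lam (Suc (2*k)) / 2"
    and H2: "\<And>k. 4 * lam (2*k) \<le> lam (Suc (2*k))"
    and H3: "\<And>k. lam (2*k) \<le> A * 2^k"
  shows "essentially_self_adjoint (jacobi_graph lam (\<lambda>_. 0))"
  unfolding essentially_self_adjoint_def self_adjoint_graph_def
proof
  show "adjoint_graph (closure_graph (jacobi_graph lam (\<lambda>_. 0))) \<subseteq> closure_graph (jacobi_graph lam (\<lambda>_. 0))"
  proof (clarify)
    fix v w assume a: "(v, w) \<in> adjoint_graph (closure_graph (jacobi_graph lam (\<lambda>_. 0)))"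
    have "w = J lam (\<lambda>_. 0) v" "l2 v" "l2 w" using adj_sub[OF a] by auto
    thus "(v, w) \<in> closure_graph (jacobi_graph lam (\<lambda>_. 0))"
      using trunc_closure[OF pos H1 H2 H3] by simp
  qed
  show "closure_graph (jacobi_graph lam (\<lambda>_. 0)) \<subseteq> adjoint_graph (closure_graph (jacobi_graph lam (\<lambda>_. 0)))"
  proof (clarify)
    fix u x assume a: "(u, x) \<in> closure_graph (jacobi_graph lam (\<lambda>_. 0))"
    have "x = J lam (\<lambda>_. 0) u" "l2 u" "l2 x" using closure_sub[OF a] by auto
    thus "(u, x) \<in> adjoint_graph (closure_graph (jacobi_graph lam (\<lambda>_. 0)))"
      using adj_M by simp
  qed
qed

theorem lemma5:
  shows "\<exists>lam b :: nat \<Rightarrow> real. (\<forall>n. lam n > 0) \<and>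
           \<not> essentially_self_adjoint (jacobi_graph lam b) \<and>
           essentially_self_adjoint (jacobi_graph lam (\<lambda>_. 0))"
proof (intro exI conjI)
  show "\<forall>n. lamc n > 0" using lamc_pos by blast
  show "\<not> essentially_self_adjoint (jacobi_graph lamc (bcoef lamc vv))"
  proof (rule non_esa[OF l2_vv vv_nz[of 0]])
    fix n
    show "J lamc (bcoef lamc vv) vv n = \<i> * vv n"
      by (rule eigen[OF vv_nz]) (use lamc_eq in \<open>simp add: II_def SS_def\<close>)
  qed
  show "essentially_self_adjoint (jacobi_graph lamc (\<lambda>_. 0))"
    by (rule esa_crit[OF lamc_pos H1 H2 H3])
qed

end
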